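(* Suppose Assumption (F) below holds, and let $F(r)=\frac{r}{1+r}$. Define $g(x,k,z,l)=\mathbf 1_{\{k\ne l\}}$ and $f(x,k,z,l)=F(|x-z|)+\mathbf 1_{\{k\ne l\}}$ on $\mathbb R^d\times\mathbb S\times\mathbb R^d\times\mathbb S$. Then for every $R>0$, with $\kappa_R$ the constant of Assumption (F): (1) $\widetilde{\mathcal A}g(x,k,z,l)\le\kappa_R\varrho(F(|x-z|))$ for all $k,l\in\mathbb S$ and $x,z\in\mathbb R^d$ with $|x|\vee|z|\le R$; (2) $\widetilde{\mathcal A}f(x,k,z,k)\le2\kappa_R\varrho(F(|x-z|))$ for all $k\in\mathbb S$ and $x,z\in\mathbb R^d$ with $|x|\vee|z|\le R$ and $0<|x-z|\le\delta_0$.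
   Context: Setting: $(U,\mathfrak U)$ measurable space, $\nu$ $\sigma$-finite on $U$, $\mathbb S=\{1,2,\dots\}$; Borel maps $b:\mathbb R^d\times\mathbb S\to\mathbb R^d$, $\sigma:\mathbb R^d\times\mathbb S\to\mathbb R^{d\times d}$, $c:\mathbb R^d\times\mathbb S\times U\to\mathbb R^d$; $q_{kl}(x)\ge0$ ($k\ne l$), $q_{kk}(x)=-\sum_{l\ne k}q_{kl}(x)$. Coupling operator: for $f$ on $\mathbb R^d\times\mathbb S\times\mathbb R^d\times\mathbb S$ twice continuously differentiable in $(x,z)$, set $\widetilde{\mathcal A}f=(\widetilde\Omega_d+\widetilde\Omega_j+\widetilde\Omega_s)f$, where, with $a(x,i)=\sigma(x,i)\sigma(x,i)^T$, $a(x,i,z,j)=\begin{pmatrix}a(x,i)&\sigma(x,i)\sigma(z,j)^T\\ \sigma(z,j)\sigma(x,i)^T&a(z,j)\end{pmatrix}$, $b(x,i,z,j)=(b(x,i),b(z,j))^T$, and $D,D^2$ the gradient and Hessian in $(x,z)$: $\widetilde\Omega_df=\frac12\mathrm{tr}(a(x,i,z,j)D^2f)+\langle b(x,i,z,j),Df\rangle$; $\widetilde\Omega_jf=\int_U[f(x+c(x,i,u),i,z+c(z,j,u),j)-f(x,i,z,j)-\langle D_xf,c(x,i,u)\rangle-\langle D_zf,c(z,j,u)\rangle]\nu(du)$; $\widetilde\Omega_sf=\sum_l[q_{il}(x)-q_{jl}(z)]^+(f(x,l,z,j)-f(x,i,z,j))+\sum_l[q_{jl}(z)-q_{il}(x)]^+(f(x,i,z,l)-f(x,i,z,j))+\sum_l[q_{il}(x)\wedge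 q_{jl}(z)](f(x,l,z,l)-f(x,i,z,j))$. Assumption (F): there exist $\delta_0>0$ and an increasing concave $\varrho:[0,\infty)\to[0,\infty)$ with $0<\varrho(r)\le(1+r)^2\varrho(r/(1+r))$ for all $r>0$ and $\int_{0^+}\frac{dr}{\varrho(r)}=\infty$, such that for every $R>0$ there is $\kappa_R>0$ with $\sum_{l\ne k}|q_{kl}(x)-q_{kl}(z)|\le\kappa_R\varrho(F(|x-z|))$ for all $k$ and $|x|\vee|z|\le R$, and, for all $k\in\mathbb S$ and $x,z$ with $|x|\vee|z|\le R$, $|x-z|\le\delta_0$: (i) if $d=1$: $\mathrm{sgn}(x-z)(b(x,k)-b(z,k))\le\kappa_R\varrho(|x-z|)$ (with $\mathrm{sgn}(a)=1$ if $a>0$, $-1$ if $a\le0$), and $x\mapsto x+c(x,k,u)$ is nondecreasing for every $u\in U$; (ii) if $d\ge2$: $\int_U[|c(x,k,u)-c(z,k,u)|^2\wedge(4|x-z|\,|c(x,k,u)-c(z,k,u)|)]\nu(du)+2\langle x-z,b(x,k)-b(z,k)\rangle+|\sigma(x,k)-\sigma(z,k)|^2\le2\kappa_R|x-z|\varrho(|x-z|)$. *)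

theory Defs
  imports "HOL-Analysis.Analysis"
begin

text \<open>The dimension d is CARD('n), points of R^d are real^'n.
  The state space S = {1,2,...} is represented by nat (state n+1 of the paper is n here).
  Matrices are real^'n^'n; the norm of a matrix is the Frobenius (Hilbert-Schmidt) norm.\<close>

definition Fr :: "real \<Rightarrow> real" where
  "Fr r = r / (1 + r)"

definition sgnF :: "real \<Rightarrow> real" where
  "sgnF a = (if a > 0 then 1 else -1)"

definition joinv :: "real^'n \<Rightarrow> real^'n \<Rightarrow> real^('n + 'n)" where
  "joinv x z = (\<chi> s. case s of Inl p \<Rightarrow> x $ p | Inr p \<Rightarrow> z $ p)"

definition splitx :: "real^('n + 'n) \<Rightarrow> real^'n" where
  "splitx w = (\<chi> p. w $ Inl p)"

definition splitz :: "real^('n + 'n) \<Rightarrow> real^'n" where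
  "splitz w = (\<chi> p. w $ Inr p)"

definition pd :: "'m::finite \<Rightarrow> (real^'m \<Rightarrow> real) \<Rightarrow> real^'m \<Rightarrow> real" where
  "pd s \<phi> w = deriv (\<lambda>t. \<phi> (w + t *\<^sub>R axis s 1)) 0"

definition grad :: "(real^'m::finite \<Rightarrow> real) \<Rightarrow> real^'m \<Rightarrow> real^'m" where
  "grad \<phi> w = (\<chi> s. pd s \<phi> w)"

definition hess :: "(real^'m::finite \<Rightarrow> real) \<Rightarrow> real^'m \<Rightarrow> real^'m^'m" where
  "hess \<phi> w = (\<chi> s t. pd s (pd t \<phi>) w)"

definition joint_fun :: "(real^'n \<Rightarrow> nat \<Rightarrow> real^'n \<Rightarrow> nat \<Rightarrow> real) \<Rightarrow> nat \<Rightarrow> nat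
    \<Rightarrow> real^('n + 'n) \<Rightarrow> real" where
  "joint_fun f i j w = f (splitx w) i (splitz w) j"

definition Dx :: "(real^'n \<Rightarrow> nat \<Rightarrow> real^'n \<Rightarrow> nat \<Rightarrow> real) \<Rightarrow> real^'n \<Rightarrow> nat \<Rightarrow> real^'n \<Rightarrow> nat
    \<Rightarrow> real^'n" where
  "Dx f x i z j = (\<chi> p. grad (joint_fun f i j) (joinv x z) $ Inl p)"

definition Dz :: "(real^'n \<Rightarrow> nat \<Rightarrow> real^'n \<Rightarrow> nat \<Rightarrow> real) \<Rightarrow> real^'n \<Rightarrow> nat \<Rightarrow> real^'n \<Rightarrow> nat
    \<Rightarrow> real^'n" where
  "Dz f x i z j = (\<chi> p. grad (joint_fun f i j) (joinv x z) $ Inr p)"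

definition coup_a :: "(real^'n \<Rightarrow> nat \<Rightarrow> real^'n^'n) \<Rightarrow> real^'n \<Rightarrow> nat \<Rightarrow> real^'n \<Rightarrow> nat
    \<Rightarrow> real^('n + 'n)^('n + 'n)" where
  "coup_a \<sigma> x i z j = (\<chi> s t. case (s, t) of
      (Inl p, Inl q) \<Rightarrow> (\<sigma> x i ** transpose (\<sigma> x i)) $ p $ q
    | (Inl p, Inr q) \<Rightarrow> (\<sigma> x i ** transpose (\<sigma> z j)) $ p $ q
    | (Inr p, Inl q) \<Rightarrow> (\<sigma> z j ** transpose (\<sigma> x i)) $ p $ q
    | (Inr p, Inr q) \<Rightarrow> (\<sigma> z j ** transpose (\<sigma> z j)) $ p $ q)"

definition Omega_d :: "(real^'n \<Rightarrow> nat \<Rightarrow> real^'n) \<Rightarrow> (real^'n \<Rightarrow> nat \<Rightarrow> real^'n^'n)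
    \<Rightarrow> (real^'n \<Rightarrow> nat \<Rightarrow> real^'n \<Rightarrow> nat \<Rightarrow> real) \<Rightarrow> real^'n \<Rightarrow> nat \<Rightarrow> real^'n \<Rightarrow> nat \<Rightarrow> real" where
  "Omega_d b \<sigma> f x i z j =
     1/2 * trace (coup_a \<sigma> x i z j ** hess (joint_fun f i j) (joinv x z))
     + joinv (b x i) (b z j) \<bullet> grad (joint_fun f i j) (joinv x z)"

definition Omega_j :: "(real^'n \<Rightarrow> nat \<Rightarrow> 'u \<Rightarrow> real^'n) \<Rightarrow> 'u measure
    \<Rightarrow> (real^'n \<Rightarrow> nat \<Rightarrow> real^'n \<Rightarrow> nat \<Rightarrow> real) \<Rightarrow> real^'n \<Rightarrow> nat \<Rightarrow> real^'n \<Rightarrow> nat \<Rightarrow> real" where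
  "Omega_j c \<nu> f x i z j =
     (\<integral>u. f (x + c x i u) i (z + c z j u) j - f x i z j
            - Dx f x i z j \<bullet> c x i u - Dz f x i z j \<bullet> c z j u \<partial>\<nu>)"

definition Omega_s :: "(nat \<Rightarrow> nat \<Rightarrow> real^'n \<Rightarrow> real)
    \<Rightarrow> (real^'n \<Rightarrow> nat \<Rightarrow> real^'n \<Rightarrow> nat \<Rightarrow> real) \<Rightarrow> real^'n \<Rightarrow> nat \<Rightarrow> real^'n \<Rightarrow> nat \<Rightarrow> real" where
  "Omega_s q f x i z j =
     (\<Sum>l. max 0 (q i l x - q j l z) * (f x l z j - f x i z j))
   + (\<Sum>l. max 0 (q j l z - q i l x) * (f x i z l - f x i z j))
   + (\<Sum>l. min (q i l x) (q j l z) * (f x l z l - f x i z j))"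

definition coupA :: "(real^'n \<Rightarrow> nat \<Rightarrow> real^'n) \<Rightarrow> (real^'n \<Rightarrow> nat \<Rightarrow> real^'n^'n)
    \<Rightarrow> (real^'n \<Rightarrow> nat \<Rightarrow> 'u \<Rightarrow> real^'n) \<Rightarrow> 'u measure \<Rightarrow> (nat \<Rightarrow> nat \<Rightarrow> real^'n \<Rightarrow> real)
    \<Rightarrow> (real^'n \<Rightarrow> nat \<Rightarrow> real^'n \<Rightarrow> nat \<Rightarrow> real) \<Rightarrow> real^'n \<Rightarrow> nat \<Rightarrow> real^'n \<Rightarrow> nat \<Rightarrow> real" where
  "coupA b \<sigma> c \<nu> q f x i z j = Omega_d b \<sigma> f x i z j + Omega_j c \<nu> f x i z j + Omega_s q f x i z j"

definition condF :: "(real^'n \<Rightarrow> nat \<Rightarrow> real^'n) \<Rightarrow> (real^'n \<Rightarrow> nat \<Rightarrow> real^'n^'n)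
    \<Rightarrow> (real^'n \<Rightarrow> nat \<Rightarrow> 'u \<Rightarrow> real^'n) \<Rightarrow> 'u measure \<Rightarrow> (nat \<Rightarrow> nat \<Rightarrow> real^'n \<Rightarrow> real)
    \<Rightarrow> real \<Rightarrow> (real \<Rightarrow> real) \<Rightarrow> real \<Rightarrow> real \<Rightarrow> bool" where
  "condF b \<sigma> c \<nu> q \<delta>0 \<rho> R \<kappa> \<longleftrightarrow>
     (\<forall>k x z. max (norm x) (norm z) \<le> R \<longrightarrow>
        (\<Sum>l. if l = k then 0 else \<bar>q k l x - q k l z\<bar>) \<le> \<kappa> * \<rho> (Fr (norm (x - z)))) \<and>
     (\<forall>k x z. max (norm x) (norm z) \<le> R \<and> norm (x - z) \<le> \<delta>0 \<longrightarrow>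
        (CARD('n) = 1 \<longrightarrow>
           (\<forall>p. sgnF (x $ p - z $ p) * (b x k $ p - b z k $ p) \<le> \<kappa> * \<rho> (norm (x - z))) \<and>
           (\<forall>u\<in>space \<nu>. \<forall>p. x $ p \<le> z $ p \<longrightarrow> (x + c x k u) $ p \<le> (z + c z k u) $ p)) \<and>
        (CARD('n) \<ge> 2 \<longrightarrow>
           enn2ereal (\<integral>\<^sup>+ u. ennreal (min ((norm (c x k u - c z k u))\<^sup>2)
                                   (4 * norm (x - z) * norm (c x k u - c z k u))) \<partial>\<nu>)
           + ereal (2 * ((x - z) \<bullet> (b x k - b z k)) + (norm (\<sigma> x k - \<sigma> z k))\<^sup>2)
           \<le> ereal (2 * \<kappa> * norm (x - z) * \<rho> (norm (x - z)))))"

end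

theory Submission
  imports Defs
begin


definition Dv :: "real^('n + 'n) \<Rightarrow> real^'n" where "Dv w = splitx w - splitz w"
definition ps :: "'n + 'n \<Rightarrow> 'n" where "ps s = (case s of Inl p \<Rightarrow> p | Inr p \<Rightarrow> p)"
definition eps :: "'n + 'n \<Rightarrow> real" where "eps s = (case s of Inl p \<Rightarrow> 1 | Inr p \<Rightarrow> -1)"

lemma Dv_shift: "Dv (w + t *\<^sub>R axis s 1) = Dv w + (t * eps s) *\<^sub>R axis (ps s) (1::real)"
  by (cases s) (auto simp: vec_eq_iff Dv_def splitx_def splitz_def axis_def ps_def eps_def)

lemma Dv_joinv[simp]: "Dv (joinv x z) = x - z"
  by (simp add: vec_eq_iff Dv_def splitx_def splitz_def joinv_def)

lemma norm_deriv:
  fixes v a :: "real^'n"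
  assumes "v \<noteq> 0"
  shows "((\<lambda>t. norm (v + t *\<^sub>R a)) has_real_derivative (v \<bullet> a) / norm v) (at 0)"
proof -
  have "((\<lambda>t. v + t *\<^sub>R a) has_derivative (\<lambda>h. h *\<^sub>R a)) (at 0)"
    by (auto intro!: derivative_eq_intros)
  from has_derivative_compose[OF this has_derivative_norm[of "v + 0 *\<^sub>R a"]]
  have "((\<lambda>t. norm (v + t *\<^sub>R a)) has_derivative (\<lambda>x. inverse (norm v) * (x * (a \<bullet> v)))) (at 0)"
    using assms by (simp add: sgn_div_norm inner_commute mult.commute)
  moreover have "(\<lambda>x. inverse (norm v) * (x * (a \<bullet> v))) = (*) ((v \<bullet> a) / norm v)"
    by (auto simp: fun_eq_iff field_simps inner_commute)
  ultimately show ?thesis by (simp add: has_field_derivative_def)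
qed

definition GG :: "real \<Rightarrow> real" where "GG r = 1 / (r * (1 + r)^2)"
definition GG' :: "real \<Rightarrow> real" where "GG' r = - (1 + 3*r) / (r^2 * (1 + r)^3)"

lemma Fr_deriv: "r > -1 \<Longrightarrow> (Fr has_real_derivative 1 / (1 + r)^2) (at r)"
  unfolding Fr_def[abs_def]
  by (auto intro!: derivative_eq_intros simp: field_simps power2_eq_square)

lemma GG_deriv: "r > 0 \<Longrightarrow> (GG has_real_derivative GG' r) (at r)"
proof -
  assume r: "r > 0"
  have d: "((\<lambda>r. r * (1 + r)^2) has_real_derivative (1 + r) * (1 + 3 * r)) (at r)"
    by (rule DERIV_cong, (rule derivative_eq_intros refl)+) (simp add: algebra_simps power2_eq_square)
  have "((\<lambda>r. inverse (r * (1 + r)^2)) has_real_derivative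
     - ((1 + r) * (1 + 3 * r) * inverse ((r * (1 + r)^2)^2))) (at r)"
    using DERIV_inverse_fun[OF d] r by (simp add: numeral_2_eq_2)
  moreover have "- ((1 + r) * (1 + 3 * r) * inverse ((r * (1 + r)^2)^2)) = GG' r"
  proof -
    have n1: "(r * (1 + r)^2)^2 \<noteq> 0" "r^2 * (1 + r)^3 \<noteq> 0" using r by auto
    have "- ((1 + r) * (1 + 3 * r) * inverse ((r * (1 + r)^2)^2)) = (- ((1 + r) * (1 + 3 * r))) / ((r * (1 + r)^2)^2)"
      by (simp add: divide_inverse)
    also have "\<dots> = - (1 + 3*r) / (r^2 * (1 + r)^3)"
      by (subst frac_eq_eq[OF n1]) algebra
    finally show ?thesis unfolding GG'_def .
  qed
  ultimately show ?thesis unfolding GG_def[abs_def] by (simp add: inverse_eq_divide)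
qed


lemma sum_Plus_UNIV: "sum g (UNIV :: ('a::finite + 'b::finite) set) = sum (\<lambda>p. g (Inl p)) UNIV + sum (\<lambda>p. g (Inr p)) UNIV"
  by (subst UNIV_Plus_UNIV[symmetric], subst sum.Plus) (auto simp: o_def)

lemma scaleR_axis_eq: "(t * e) *\<^sub>R axis p (1::real) = t *\<^sub>R (e *\<^sub>R axis p 1)"
  by simp

lemma inner_eps_axis: "v \<bullet> (e *\<^sub>R axis p (1::real)) = e * v $ p"
  by (simp add: inner_axis)

lemma pd_phi:
  fixes w :: "real^('n::finite + 'n)"
  assumes "Dv w \<noteq> 0"
  shows "pd s (\<lambda>w. Fr (norm (Dv w))) w = eps s * GG (norm (Dv w)) * (Dv w $ ps s)"
proof -
  let ?v = "Dv w" and ?a = "eps s *\<^sub>R axis (ps s) (1::real)"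
  have "((\<lambda>t. Fr (norm (?v + t *\<^sub>R ?a))) has_real_derivative
      1 / (1 + norm (?v + 0 *\<^sub>R ?a))^2 * ((?v \<bullet> ?a) / norm ?v)) (at 0)"
    by (rule DERIV_chain2[OF Fr_deriv norm_deriv[OF assms]])
      (smt (verit) norm_ge_zero)
  moreover have "1 / (1 + norm (?v + 0 *\<^sub>R ?a))^2 * ((?v \<bullet> ?a) / norm ?v) = eps s * GG (norm ?v) * (?v $ ps s)"
    using assms by (simp add: inner_eps_axis inner_axis GG_def field_simps)
  ultimately show ?thesis
    unfolding pd_def Dv_shift scaleR_axis_eq by (simp add: DERIV_imp_deriv)
qed

lemma ev_Dv_nz:
  fixes w :: "real^('n::finite + 'n)"
  assumes "Dv w \<noteq> 0"
  shows "eventually (\<lambda>t. Dv (w + t *\<^sub>R axis s 1) \<noteq> 0) (nhds 0)"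
proof -
  have "eventually (\<lambda>t::real. dist t 0 < norm (Dv w)) (nhds 0)"
    using assms unfolding eventually_nhds_metric by (intro exI[of _ "norm (Dv w)"]) auto
  then show ?thesis
  proof (rule eventually_mono)
    fix t :: real assume "dist t 0 < norm (Dv w)"
    then have "norm ((t * eps s) *\<^sub>R axis (ps s) (1::real)) < norm (Dv w)"
      by (simp add: eps_def split: sum.splits)
    then show "Dv (w + t *\<^sub>R axis s 1) \<noteq> 0" unfolding Dv_shift
      by (metis add.commute add_diff_cancel_left' diff_0 norm_minus_cancel order_less_irrefl)
  qed
qed

lemma axis_comp: "axis q (1::real) $ p = (if p = q then 1 else 0)"
  by (simp add: axis_def)

lemma pd2_phi:
  fixes w :: "real^('n::finite + 'n)"
  assumes nz: "Dv w \<noteq> 0"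
  shows "pd s (pd t (\<lambda>w. Fr (norm (Dv w)))) w =
    eps t * (GG' (norm (Dv w)) * (eps s * Dv w $ ps s / norm (Dv w)) * Dv w $ ps t
       + GG (norm (Dv w)) * (eps s * (if ps t = ps s then 1 else 0)))"
proof -
  let ?v = "Dv w" and ?a = "eps s *\<^sub>R axis (ps s) (1::real)"
  define h where "h = (\<lambda>\<tau>. eps t * GG (norm (?v + \<tau> *\<^sub>R ?a)) * (?v $ ps t + \<tau> * ?a $ ps t))"
  have ev: "eventually (\<lambda>\<tau>. pd t (\<lambda>w. Fr (norm (Dv w))) (w + \<tau> *\<^sub>R axis s 1) = h \<tau>) (nhds 0)"
    using ev_Dv_nz[OF nz, of s]
  proof (rule eventually_mono)
    fix \<tau> :: real assume nz': "Dv (w + \<tau> *\<^sub>R axis s 1) \<noteq> 0"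
    show "pd t (\<lambda>w. Fr (norm (Dv w))) (w + \<tau> *\<^sub>R axis s 1) = h \<tau>"
      using pd_phi[OF nz', of t] by (simp add: Dv_shift h_def)
  qed
  have vnz: "norm ?v > 0" using nz by simp
  have g: "((\<lambda>\<tau>. GG (norm (?v + \<tau> *\<^sub>R ?a))) has_real_derivative
      GG' (norm (?v + 0 *\<^sub>R ?a)) * ((?v \<bullet> ?a) / norm ?v)) (at 0)"
    using DERIV_chain2[OF GG_deriv norm_deriv[OF nz], of ?a] vnz by simp
  have "(h has_real_derivative eps t * (GG' (norm ?v) * ((?v \<bullet> ?a) / norm ?v) * (?v $ ps t + 0 * ?a $ ps t)
        + GG (norm (?v + 0 *\<^sub>R ?a)) * (?a $ ps t))) (at 0)"
    unfolding h_def
    by (rule DERIV_cong, (rule derivative_eq_intros g refl)+) (simp add: algebra_simps)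
  then have "(h has_real_derivative eps t * (GG' (norm ?v) * (eps s * ?v $ ps s / norm ?v) * ?v $ ps t
       + GG (norm ?v) * (eps s * (if ps t = ps s then 1 else 0)))) (at 0)"
    by (simp only: inner_eps_axis axis_comp vector_scaleR_component) (simp add: algebra_simps)
  then have "((\<lambda>\<tau>. pd t (\<lambda>w. Fr (norm (Dv w))) (w + \<tau> *\<^sub>R axis s 1)) has_real_derivative eps t * (GG' (norm ?v) * (eps s * ?v $ ps s / norm ?v) * ?v $ ps t
       + GG (norm ?v) * (eps s * (if ps t = ps s then 1 else 0)))) (at 0)"
    by (subst DERIV_cong_ev[OF refl ev refl])
  then show ?thesis unfolding pd_def[of s] by (rule DERIV_imp_deriv)
qed

lemma quad_ident:
  fixes T :: "'n::finite \<Rightarrow> 'n \<Rightarrow> real" and v :: "'n \<Rightarrow> real"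
  shows "(\<Sum>p\<in>UNIV. \<Sum>q\<in>UNIV. (\<Sum>j\<in>UNIV. T p j * T q j) * (\<alpha> * v q * v p + \<beta> * (if q = p then 1 else 0)))
     = \<alpha> * (\<Sum>j\<in>UNIV. (\<Sum>p\<in>UNIV. T p j * v p)^2) + \<beta> * (\<Sum>p\<in>UNIV. \<Sum>j\<in>UNIV. (T p j)^2)"
proof -
  have 1: "(\<Sum>p\<in>UNIV. \<Sum>q\<in>UNIV. (\<Sum>j\<in>UNIV. T p j * T q j) * (\<alpha> * v q * v p + \<beta> * (if q = p then 1 else 0)))
     = (\<Sum>p\<in>UNIV. \<Sum>q\<in>UNIV. \<alpha> * (\<Sum>j\<in>UNIV. T p j * T q j * v q * v p))
       + (\<Sum>p\<in>UNIV. \<Sum>q\<in>UNIV. (if q = p then \<beta> * (\<Sum>j\<in>UNIV. T p j * T q j) else 0))"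
  proof -
    have "\<And>p q. (\<Sum>j\<in>UNIV. T p j * T q j) * (\<alpha> * v q * v p + \<beta> * (if q = p then 1 else 0))
       = \<alpha> * (\<Sum>j\<in>UNIV. T p j * T q j * v q * v p) + (if q = p then \<beta> * (\<Sum>j\<in>UNIV. T p j * T q j) else 0)"
      by (simp add: distrib_left distrib_right sum_distrib_left sum_distrib_right mult.commute mult.left_commute)
    then show ?thesis by (simp add: sum.distrib)
  qed
  have 2: "(\<Sum>p\<in>UNIV. \<Sum>q\<in>UNIV. (if q = p then \<beta> * (\<Sum>j\<in>UNIV. T p j * T q j) else 0))
      = \<beta> * (\<Sum>p\<in>UNIV. \<Sum>j\<in>UNIV. (T p j)^2)"
    by (simp add: sum_distrib_left power2_eq_square)
  have 3: "(\<Sum>p\<in>UNIV. \<Sum>q\<in>UNIV. \<alpha> * (\<Sum>j\<in>UNIV. T p j * T q j * v q * v p))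
     = \<alpha> * (\<Sum>j\<in>UNIV. (\<Sum>p\<in>UNIV. T p j * v p)^2)"
  proof -
    have "(\<Sum>p\<in>UNIV. \<Sum>q\<in>UNIV. (\<Sum>j\<in>UNIV. T p j * T q j * v q * v p))
        = (\<Sum>p\<in>UNIV. \<Sum>j\<in>UNIV. \<Sum>q\<in>UNIV. T p j * T q j * v q * v p)"
      by (rule sum.cong[OF refl], rule sum.swap)
    also have "\<dots> = (\<Sum>j\<in>UNIV. \<Sum>p\<in>UNIV. \<Sum>q\<in>UNIV. T p j * T q j * v q * v p)"
      by (rule sum.swap)
    also have "\<dots> = (\<Sum>j\<in>UNIV. (\<Sum>p\<in>UNIV. T p j * v p)^2)"
      by (simp add: power2_eq_square sum_product mult.commute mult.left_commute)
    finally show ?thesis by (simp only: sum_distrib_left[symmetric])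
  qed
  show ?thesis using 1 2 3 by simp
qed

lemma hess_phi:
  fixes x z :: "real^'n::finite"
  assumes "x \<noteq> z"
  shows "hess (\<lambda>w. Fr (norm (Dv w))) (joinv x z) $ t $ s = eps t * eps s *
     ((GG' (norm (x - z)) / norm (x - z)) * (x - z) $ ps t * (x - z) $ ps s
      + GG (norm (x - z)) * (if ps t = ps s then 1 else 0))"
  using assms by (simp add: hess_def pd2_phi algebra_simps)

lemma trace_phi:
  fixes x z :: "real^'n::finite" and \<sigma> :: "real^'n \<Rightarrow> nat \<Rightarrow> real^'n^'n"
  assumes "x \<noteq> z"
  shows "trace (coup_a \<sigma> x k z k ** hess (\<lambda>w. Fr (norm (Dv w))) (joinv x z)) =
    (GG' (norm (x - z)) / norm (x - z)) * (\<Sum>j\<in>UNIV. (\<Sum>p\<in>UNIV. (\<sigma> x k - \<sigma> z k) $ p $ j * (x - z) $ p)^2)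
    + GG (norm (x - z)) * (norm (\<sigma> x k - \<sigma> z k))^2"
proof -
  define \<alpha> where "\<alpha> = GG' (norm (x - z)) / norm (x - z)"
  define \<beta> where "\<beta> = GG (norm (x - z))"
  define v where "v = x - z"
  define T where "T = \<sigma> x k - \<sigma> z k"
  define M where "M = (\<lambda>q p. \<alpha> * v $ q * v $ p + \<beta> * (if q = p then 1 else (0::real)))"
  have H: "\<And>t s. hess (\<lambda>w. Fr (norm (Dv w))) (joinv x z) $ t $ s = eps t * eps s * M (ps t) (ps s)"
    using hess_phi[OF assms] by (simp add: M_def \<alpha>_def \<beta>_def v_def)
  have "trace (coup_a \<sigma> x k z k ** hess (\<lambda>w. Fr (norm (Dv w))) (joinv x z))
      = (\<Sum>p\<in>UNIV. \<Sum>q\<in>UNIV. (\<Sum>j\<in>UNIV. T $ p $ j * T $ q $ j) * M q p)"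
    unfolding trace_def matrix_matrix_mult_def H
    by (simp add: sum_Plus_UNIV coup_a_def eps_def ps_def matrix_matrix_mult_def transpose_def T_def
         sum.distrib[symmetric] sum_subtractf[symmetric] sum_distrib_right algebra_simps)
       (simp add: sum.distrib sum_subtractf right_diff_distrib distrib_left)
  also have "\<dots> = \<alpha> * (\<Sum>j\<in>UNIV. (\<Sum>p\<in>UNIV. T $ p $ j * v $ p)^2) + \<beta> * (\<Sum>p\<in>UNIV. \<Sum>j\<in>UNIV. (T $ p $ j)^2)"
    unfolding M_def using quad_ident[of "\<lambda>p j. T $ p $ j" \<alpha> "\<lambda>p. v $ p" \<beta>] by simp
  also have "(\<Sum>p\<in>UNIV. \<Sum>j\<in>UNIV. (T $ p $ j)^2) = (norm T)^2"
    unfolding power2_norm_eq_inner by (simp add: inner_vec_def power2_eq_square)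
  finally show ?thesis by (simp add: \<alpha>_def \<beta>_def v_def T_def)
qed

abbreviation f2 :: "real^'n \<Rightarrow> nat \<Rightarrow> real^'n \<Rightarrow> nat \<Rightarrow> real" where
  "f2 \<equiv> (\<lambda>x k z l. Fr (norm (x - z)) + (if k \<noteq> l then 1 else 0))"

lemma joint_f2: "joint_fun f2 k k = (\<lambda>w. Fr (norm (Dv w)))"
  by (simp add: fun_eq_iff joint_fun_def Dv_def)

lemma grad_phi:
  fixes x z :: "real^'n::finite"
  assumes "x \<noteq> z"
  shows "grad (\<lambda>w. Fr (norm (Dv w))) (joinv x z) $ s = eps s * GG (norm (x - z)) * (x - z) $ ps s"
  using assms by (simp add: grad_def pd_phi)

lemma Omega_d_f2:
  fixes x z :: "real^'n::finite"
  assumes "x \<noteq> z"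
  shows "Omega_d b \<sigma> f2 x k z k = 1/2 * ((GG' (norm (x - z)) / norm (x - z)) * (\<Sum>j\<in>UNIV. (\<Sum>p\<in>UNIV. (\<sigma> x k - \<sigma> z k) $ p $ j * (x - z) $ p)^2)
    + GG (norm (x - z)) * (norm (\<sigma> x k - \<sigma> z k))^2) + GG (norm (x - z)) * ((x - z) \<bullet> (b x k - b z k))"
proof -
  have "joinv (b x k) (b z k) \<bullet> grad (\<lambda>w. Fr (norm (Dv w))) (joinv x z) = GG (norm (x - z)) * ((x - z) \<bullet> (b x k - b z k))"
    unfolding inner_vec_def grad_phi[OF assms]
    by (simp add: sum_Plus_UNIV joinv_def eps_def ps_def sum_distrib_left sum_subtractf[symmetric] algebra_simps)
      (simp add: sum.distrib[symmetric] sum_subtractf[symmetric] algebra_simps)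
  then show ?thesis unfolding Omega_d_def joint_f2 trace_phi[OF assms] by simp
qed

lemma Omega_j_f2:
  fixes x z :: "real^'n::finite"
  assumes "x \<noteq> z"
  shows "Omega_j c \<nu> f2 x k z k = (\<integral>u. Fr (norm (x - z + (c x k u - c z k u))) - Fr (norm (x - z))
      - GG (norm (x - z)) * ((x - z) \<bullet> (c x k u - c z k u)) \<partial>\<nu>)"
proof -
  have dx: "Dx f2 x k z k = GG (norm (x - z)) *\<^sub>R (x - z)"
    unfolding Dx_def joint_f2 grad_phi[OF assms] by (simp add: vec_eq_iff eps_def ps_def)
  have dz: "Dz f2 x k z k = - GG (norm (x - z)) *\<^sub>R (x - z)"
    unfolding Dz_def joint_f2 grad_phi[OF assms] by (simp add: vec_eq_iff eps_def ps_def)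
  show ?thesis unfolding Omega_j_def dx dz
    by (rule Bochner_Integration.integral_cong[OF refl]) (simp add: algebra_simps inner_diff_right)
qed

lemma Fr_concave: "r \<ge> 0 \<Longrightarrow> s \<ge> 0 \<Longrightarrow> Fr s - Fr r - (s - r) / (1 + r)^2 \<le> 0"
proof -
  assume r: "r \<ge> 0" and s: "s \<ge> 0"
  define a where "a = 1 + r"
  define b where "b = 1 + s"
  have a: "a > 0" and b: "b > 0" using r s by (auto simp: a_def b_def)
  have "Fr s - Fr r - (s - r) / (1 + r)^2 = 1/a - 1/b - (b - a) / a^2"
    unfolding Fr_def a_def b_def using r s by (simp add: field_simps)
  also have "\<dots> = - ((a - b)^2 / (a^2 * b))"
    using a b by (simp add: field_simps power2_eq_square)
  also have "\<dots> \<le> 0" using a b by simp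
  finally show ?thesis .
qed

lemma GG_mult: "r > 0 \<Longrightarrow> GG r * r = 1 / (1 + r)^2"
  by (simp add: GG_def)

lemma GG_pos: "r > 0 \<Longrightarrow> GG r > 0"
  by (simp add: GG_def)

lemma jump_bound_d2:
  fixes v \<Delta> :: "real^'n::finite"
  assumes "v \<noteq> 0"
  shows "Fr (norm (v + \<Delta>)) - Fr (norm v) - GG (norm v) * (v \<bullet> \<Delta>)
     \<le> GG (norm v) / 2 * min ((norm \<Delta>)^2) (4 * norm v * norm \<Delta>)"
proof -
  define r where "r = norm v"
  define s where "s = norm (v + \<Delta>)"
  have r0: "r > 0" using assms by (simp add: r_def)
  have s0: "s \<ge> 0" by (simp add: s_def)
  have G0: "GG r > 0" using GG_pos[OF r0] .
  have "GG r * (r * (s - r)) = (s - r) * (GG r * r)" by (simp add: algebra_simps)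
  also have "\<dots> = (s - r) / (1 + r)^2" using GG_mult[OF r0] by simp
  finally have c1: "Fr s \<le> Fr r + GG r * (r * (s - r))"
    using Fr_concave[of r s] r0 s0 by simp
  have ss: "s^2 = r^2 + 2 * (v \<bullet> \<Delta>) + (norm \<Delta>)^2"
    unfolding s_def r_def power2_norm_eq_inner by (simp add: inner_add algebra_simps inner_commute)
  have X1: "r * s - r^2 - v \<bullet> \<Delta> \<le> (norm \<Delta>)^2 / 2"
  proof -
    have "r * s \<le> (r^2 + s^2) / 2" using sum_squares_ge_zero[of "r - s" 0]
      by (simp add: power2_eq_square algebra_simps)
    then show ?thesis using ss by simp
  qed
  have X2: "r * s - r^2 - v \<bullet> \<Delta> \<le> 2 * r * norm \<Delta>"
  proof -
    have "s \<le> r + norm \<Delta>" unfolding s_def r_def by (rule norm_triangle_ineq)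
    then have "r * s \<le> r * (r + norm \<Delta>)" using r0 by (intro mult_left_mono) auto
    moreover have "- (v \<bullet> \<Delta>) \<le> r * norm \<Delta>"
      using norm_cauchy_schwarz[of "-v" \<Delta>] unfolding r_def by simp
    ultimately show ?thesis by (simp add: power2_eq_square algebra_simps)
  qed
  have "Fr s - Fr r - GG r * (v \<bullet> \<Delta>) \<le> GG r * (r * s - r^2 - v \<bullet> \<Delta>)"
    using c1 by (simp add: power2_eq_square algebra_simps)
  moreover have "GG r * (r * s - r^2 - v \<bullet> \<Delta>) \<le> GG r / 2 * min ((norm \<Delta>)^2) (4 * r * norm \<Delta>)"
  proof (cases "(norm \<Delta>)^2 \<le> 4 * r * norm \<Delta>")
    case True
    then show ?thesis using mult_left_mono[OF X1, of "GG r"] G0 by (simp add: min_def)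
  next
    case False
    then show ?thesis using mult_left_mono[OF X2, of "GG r"] G0 by (simp add: min_def)
  qed
  ultimately show ?thesis by (simp add: r_def s_def)
qed

lemma jump_bound_1d:
  fixes d e :: real
  assumes "d \<noteq> 0" "d \<le> 0 \<longrightarrow> d + e \<le> 0" "d \<ge> 0 \<longrightarrow> d + e \<ge> 0"
  shows "Fr \<bar>d + e\<bar> - Fr \<bar>d\<bar> - GG \<bar>d\<bar> * (d * e) \<le> 0"
proof (cases "d > 0")
  case True
  then have "d + e \<ge> 0" using assms by auto
  have "GG d * (d * e) = e * (GG d * d)" by (simp add: algebra_simps)
  also have "\<dots> = e / (1 + d)^2" using GG_mult[OF True] by simp
  finally show ?thesis using Fr_concave[of d "d + e"] True \<open>d + e \<ge> 0\<close> by simp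
next
  case False
  then have d: "d < 0" "d + e \<le> 0" using assms by auto
  then have "-d > 0" by simp
  have "GG (-d) * (d * e) = - e * (GG (-d) * (-d))" by (simp add: algebra_simps)
  also have "\<dots> = - e / (1 - d)^2" using GG_mult[OF \<open>-d > 0\<close>] by simp
  finally show ?thesis using Fr_concave[of "-d" "-(d + e)"] d by simp
qed

lemma integral_le_nn:
  fixes F h :: "'u \<Rightarrow> real"
  assumes le: "\<And>u. F u \<le> C * h u" and C: "C > 0"
    and fin: "(\<integral>\<^sup>+u. ennreal (h u) \<partial>\<nu>) \<noteq> \<infinity>"
  shows "integral\<^sup>L \<nu> F \<le> C * enn2real (\<integral>\<^sup>+u. ennreal (h u) \<partial>\<nu>)"
proof (cases "integrable \<nu> F")
  case False
  then show ?thesis using C by (simp add: not_integrable_integral_eq enn2real_nonneg)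
next
  case True
  define G where "G = (\<lambda>u. F u / C)"
  have iG: "integrable \<nu> G" unfolding G_def using True by simp
  have mG: "G \<in> borel_measurable \<nu>" using iG by simp
  have "integral\<^sup>L \<nu> F = C * integral\<^sup>L \<nu> G" unfolding G_def using C by simp
  moreover have "integral\<^sup>L \<nu> G \<le> integral\<^sup>L \<nu> (\<lambda>u. max 0 (G u))"
    using iG by (intro integral_mono) auto
  moreover have "integral\<^sup>L \<nu> (\<lambda>u. max 0 (G u)) = enn2real (\<integral>\<^sup>+u. ennreal (max 0 (G u)) \<partial>\<nu>)"
    using mG by (intro integral_eq_nn_integral) auto
  moreover have "(\<integral>\<^sup>+u. ennreal (max 0 (G u)) \<partial>\<nu>) \<le> (\<integral>\<^sup>+u. ennreal (h u) \<partial>\<nu>)"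
  proof (rule nn_integral_mono)
    fix u
    have "G u \<le> h u" using le[of u] C unfolding G_def by (simp add: divide_le_eq mult.commute)
    then show "ennreal (max 0 (G u)) \<le> ennreal (h u)"
      by (cases "G u \<le> 0") (auto intro: ennreal_leI)
  qed
  then have "enn2real (\<integral>\<^sup>+u. ennreal (max 0 (G u)) \<partial>\<nu>) \<le> enn2real (\<integral>\<^sup>+u. ennreal (h u) \<partial>\<nu>)"
    using fin by (intro enn2real_mono) (auto simp: top.not_eq_extremum)
  ultimately show ?thesis using C by (smt (verit) mult_left_mono)
qed

lemma summable_offdiag:
  assumes "summable (\<lambda>l. q k l x :: real)"
  shows "summable (\<lambda>l. if l = k then 0 else q k l x)"
proof -
  have "eventually (\<lambda>l. (if l = k then 0 else q k l x) = q k l x) sequentially"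
    using eventually_gt_at_top[of k] by eventually_elim auto
  then have "summable (\<lambda>l. if l = k then 0 else q k l x) = summable (\<lambda>l. q k l x)"
    by (rule summable_cong)
  then show ?thesis using assms by simp
qed

lemma q_diag_nonpos:
  assumes qn: "\<And>k l x. k \<noteq> l \<Longrightarrow> q k l x \<ge> (0::real)"
    and qs: "\<And>k x. summable (\<lambda>l. q k l x)"
    and qd: "\<And>k x. q k k x = - (\<Sum>l. if l = k then 0 else q k l x)"
  shows "q k k x \<le> 0"
  using suminf_nonneg[OF summable_offdiag[of q k x, OF qs[of k x]]] qn unfolding qd[of k x] by fastforce


lemma Os_diag:
  fixes f :: "real^'n \<Rightarrow> nat \<Rightarrow> real^'n \<Rightarrow> nat \<Rightarrow> real"
  assumes qn: "\<And>k l x. k \<noteq> l \<Longrightarrow> q k l x \<ge> 0"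
    and qs: "\<And>k x. summable (\<lambda>l. q k l x)"
    and f1: "\<And>m. f x m z k - f x k z k = (if m \<noteq> k then 1 else 0)"
    and f2: "\<And>m. f x k z m - f x k z k = (if k \<noteq> m then 1 else 0)"
    and f3: "\<And>m. f x m z m - f x k z k = 0"
  shows "Omega_s q f x k z k = (\<Sum>l. if l = k then 0 else \<bar>q k l x - q k l z\<bar>)"
proof -
  define a where "a = (\<lambda>l. max 0 (q k l x - q k l z) * (if l \<noteq> k then 1 else 0))"
  define b where "b = (\<lambda>l. max 0 (q k l z - q k l x) * (if k \<noteq> l then 1 else 0))"
  have sa: "summable a"
  proof (rule summable_comparison_test'[OF summable_offdiag[of q k x, OF qs[of k x]], where N = 0])
    fix n :: nat
    show "norm (a n) \<le> (if n = k then 0 else q k n x)"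
      using qn[of k n x] qn[of k n z] by (auto simp: a_def)
  qed
  have sb: "summable b"
  proof (rule summable_comparison_test'[OF summable_offdiag[of q k z, OF qs[of k z]], where N = 0])
    fix n :: nat
    show "norm (b n) \<le> (if n = k then 0 else q k n z)"
      using qn[of k n x] qn[of k n z] by (auto simp: b_def)
  qed
  have "Omega_s q f x k z k = suminf a + suminf b"
    unfolding Omega_s_def a_def b_def f1 f2 f3 by simp
  also have "\<dots> = (\<Sum>l. a l + b l)" by (rule suminf_add[OF sa sb])
  also have "(\<lambda>l. a l + b l) = (\<lambda>l. if l = k then 0 else \<bar>q k l x - q k l z\<bar>)"
    by (auto simp: a_def b_def fun_eq_iff max_def)
  finally show ?thesis .
qed

lemma Os_offdiag:
  fixes x z :: "real^'n"
  assumes qn: "\<And>k l x. k \<noteq> l \<Longrightarrow> q k l x \<ge> 0"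
    and qs: "\<And>k x. summable (\<lambda>l. q k l x)"
    and qd: "\<And>k x. q k k x = - (\<Sum>l. if l = k then 0 else q k l x)"
    and kl: "k \<noteq> l"
  shows "Omega_s q (\<lambda>x k z l. if k \<noteq> l then 1 else 0) x k z l \<le> 0"
proof -
  have dk: "q k k x \<le> 0" and dl: "q l l z \<le> 0" using q_diag_nonpos[OF qn qs qd] by auto
  have S1: "(\<Sum>m. max 0 (q k m x - q l m z) * ((if m \<noteq> l then 1 else 0) - (if k \<noteq> l then 1 else 0)))
     = - max 0 (q k l x - q l l z)"
    using kl by (subst suminf_finite[of "{l}"]) auto
  have S2: "(\<Sum>m. max 0 (q l m z - q k m x) * ((if k \<noteq> m then 1 else 0) - (if k \<noteq> l then 1 else 0)))
     = - max 0 (q l k z - q k k x)"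
    using kl by (subst suminf_finite[of "{k}"]) auto
  define h where "h = (\<lambda>m. min (q k m x) (q l m z) * ((if m \<noteq> m then 1 else 0) - (if k \<noteq> l then 1 else (0::real))))"
  define h' where "h' = (\<lambda>m. if m = k then - q k k x else if m = l then - q l l z else (0::real))"
  have S3: "suminf h \<le> - q k k x - q l l z"
  proof -
    have True: "summable h"
    proof (rule summable_comparison_test'[OF qs[of k x], where N = "Suc (max k l)"])
      fix n assume "Suc (max k l) \<le> n"
      then have "n \<noteq> k" "n \<noteq> l" by auto
      then show "norm (h n) \<le> q k n x" using qn[of k n x] qn[of l n z] kl
        by (auto simp: h_def)
    qed
    have hh: "h m \<le> h' m" for m
    proof -
      have "m = k \<Longrightarrow> min (q k m x) (q l m z) = q k k x" using qn[of l k z] kl dk by auto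
      moreover have "m = l \<Longrightarrow> min (q k m x) (q l m z) = q l l z" using qn[of k l x] kl dl by auto
      moreover have "m \<noteq> k \<Longrightarrow> m \<noteq> l \<Longrightarrow> min (q k m x) (q l m z) \<ge> 0"
        using qn[of k m x] qn[of l m z] by auto
      ultimately show ?thesis using kl by (auto simp: h_def h'_def)
    qed
    have sh': "summable h'" by (rule summable_finite[of "{k, l}"]) (auto simp: h'_def)
    have "suminf h' = - q k k x - q l l z"
      using kl by (subst suminf_finite[of "{k, l}"]) (auto simp: h'_def)
    then show ?thesis using suminf_le[OF hh True sh'] by simp
  qed
  have "Omega_s q (\<lambda>x k z l. if k \<noteq> l then 1 else 0) x k z l
     = - max 0 (q k l x - q l l z) - max 0 (q l k z - q k k x) + suminf h"
    unfolding Omega_s_def S1 S2 h_def by simp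
  also have "\<dots> \<le> - (q k l x - q l l z) - (q l k z - q k k x) - q k k x - q l l z"
    using S3 by linarith
  also have "\<dots> \<le> 0" using qn[of k l x] qn[of l k z] kl by simp
  finally show ?thesis .
qed

lemma ereal_cond:
  assumes "enn2ereal I + ereal X \<le> ereal Y"
  shows "I \<noteq> \<infinity> \<and> enn2real I + X \<le> Y"
proof (cases I rule: ennreal_cases)
  case (real r)
  then show ?thesis using assms by simp
next
  case top
  then show ?thesis using assms by simp
qed

lemma pd_const: "pd s (\<lambda>w. C) w = 0"
  unfolding pd_def by (rule DERIV_imp_deriv[OF DERIV_const])

abbreviation gg :: "real^'n \<Rightarrow> nat \<Rightarrow> real^'n \<Rightarrow> nat \<Rightarrow> real" where
  "gg \<equiv> (\<lambda>x k z l. if k \<noteq> l then 1 else 0)"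

lemma Omega_d_g: "Omega_d b \<sigma> gg x k z l = 0"
proof -
  have j: "joint_fun gg k l = (\<lambda>w. if k \<noteq> l then 1 else 0)" by (simp add: fun_eq_iff joint_fun_def)
  have pc: "pd t (\<lambda>w. C) = (\<lambda>w. 0)" for t and C :: real
    by (simp add: fun_eq_iff pd_const)
  show ?thesis unfolding Omega_d_def j hess_def grad_def
    by (cases "k = l") (simp_all add: pc trace_def matrix_matrix_mult_def inner_vec_def)
qed

lemma Omega_j_g: "Omega_j c \<nu> gg x k z l = 0"
proof -
  have j: "joint_fun gg k l = (\<lambda>w. if k \<noteq> l then 1 else 0)" by (simp add: fun_eq_iff joint_fun_def)
  show ?thesis unfolding Omega_j_def Dx_def Dz_def j grad_def
    by (simp add: pd_const inner_vec_def)
qed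

lemma card1_norm': assumes u: "UNIV = {p0::'n::finite}" shows "norm (v :: 'a::real_normed_vector^'n) = norm (v $ p0)"
  unfolding norm_vec_def L2_set_def u by simp

lemma card1_norm: assumes u: "UNIV = {p0::'n::finite}" shows "norm (v :: real^'n) = \<bar>v $ p0\<bar>"
  using card1_norm'[OF u, of v] by simp

lemma card1_inner: assumes u: "UNIV = {p0::'n::finite}" shows "(v :: real^'n) \<bullet> w = v $ p0 * w $ p0"
  unfolding inner_vec_def u by simp

lemma GG'_comb: "r > 0 \<Longrightarrow> GG' r * r + GG r \<le> 0"
proof -
  assume r: "r > 0"
  have a: "GG' r * r = - (1 + 3*r) / (r * (1 + r)^3)"
    using r by (simp add: GG'_def power2_eq_square)
  have b: "GG r = (1 + r) / (r * (1 + r)^3)"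
    using r by (simp add: GG_def power2_eq_square power3_eq_cube)
  have "GG' r * r + GG r = (- (1 + 3*r) + (1 + r)) / (r * (1 + r)^3)"
    unfolding a b by (rule add_divide_distrib[symmetric])
  also have "\<dots> \<le> 0" using r by (intro divide_nonpos_pos) auto
  finally show ?thesis .
qed

lemma GG'_neg: "r > 0 \<Longrightarrow> GG' r < 0"
  by (simp add: GG'_def divide_neg_pos add_pos_pos)

lemma sgnF_abs: "d \<noteq> 0 \<Longrightarrow> d = sgnF d * \<bar>d\<bar>"
  by (simp add: sgnF_def)

lemma part2_core:
  fixes b :: "real^'n::finite \<Rightarrow> nat \<Rightarrow> real^'n"
    and \<sigma> :: "real^'n \<Rightarrow> nat \<Rightarrow> real^'n^'n"
    and c :: "real^'n \<Rightarrow> nat \<Rightarrow> 'u \<Rightarrow> real^'n"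
    and \<nu> :: "'u measure"
  assumes cond: "condF b \<sigma> c \<nu> q \<delta>0 \<rho> R \<kappa>" and kp: "\<kappa> > 0"
    and nrm: "max (norm x) (norm z) \<le> R" and xz: "x \<noteq> z" and dl: "norm (x - z) \<le> \<delta>0"
  shows "Omega_d b \<sigma> f2 x k z k + Omega_j c \<nu> f2 x k z k \<le> \<kappa> * \<rho> (norm (x - z)) / (1 + norm (x - z))^2"
proof -
  define r where "r = norm (x - z)"
  define v where "v = x - z"
  define \<beta> where "\<beta> = GG r"
  define \<tau> where "\<tau> = \<sigma> x k - \<sigma> z k"
  have r0: "r > 0" using xz by (simp add: r_def)
  have b0: "\<beta> > 0" using GG_pos[OF r0] by (simp add: \<beta>_def)
  have \<beta>r: "\<beta> * r = 1 / (1 + r)^2" using GG_mult[OF r0] by (simp add: \<beta>_def)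
  have C2: "(CARD('n) = 1 \<longrightarrow>
           (\<forall>p. sgnF (x $ p - z $ p) * (b x k $ p - b z k $ p) \<le> \<kappa> * \<rho> (norm (x - z))) \<and>
           (\<forall>u\<in>space \<nu>. \<forall>p. x $ p \<le> z $ p \<longrightarrow> (x + c x k u) $ p \<le> (z + c z k u) $ p)) \<and>
        (CARD('n) \<ge> 2 \<longrightarrow>
           enn2ereal (\<integral>\<^sup>+ u. ennreal (min ((norm (c x k u - c z k u))\<^sup>2)
                                   (4 * norm (x - z) * norm (c x k u - c z k u))) \<partial>\<nu>)
           + ereal (2 * ((x - z) \<bullet> (b x k - b z k)) + (norm (\<sigma> x k - \<sigma> z k))\<^sup>2)
           \<le> ereal (2 * \<kappa> * norm (x - z) * \<rho> (norm (x - z))))"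
    using cond nrm dl unfolding condF_def by blast
  have C2': "(CARD('n) = 1 \<longrightarrow>
           (\<forall>u\<in>space \<nu>. \<forall>p. z $ p \<le> x $ p \<longrightarrow> (z + c z k u) $ p \<le> (x + c x k u) $ p))"
  proof -
    have "max (norm z) (norm x) \<le> R \<and> norm (z - x) \<le> \<delta>0" using nrm dl by (simp add: norm_minus_commute max.commute)
    then show ?thesis using cond unfolding condF_def by blast
  qed
  have Od: "Omega_d b \<sigma> f2 x k z k = 1/2 * ((GG' r / r) * (\<Sum>j\<in>UNIV. (\<Sum>p\<in>UNIV. \<tau> $ p $ j * v $ p)^2)
      + \<beta> * (norm \<tau>)^2) + \<beta> * (v \<bullet> (b x k - b z k))"
    using Omega_d_f2[OF xz, of b \<sigma> k] by (simp add: r_def v_def \<beta>_def \<tau>_def)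
  have Oj: "Omega_j c \<nu> f2 x k z k = (\<integral>u. Fr (norm (v + (c x k u - c z k u))) - Fr r
      - \<beta> * (v \<bullet> (c x k u - c z k u)) \<partial>\<nu>)"
    using Omega_j_f2[OF xz, of c \<nu> k] by (simp add: r_def v_def \<beta>_def)
  have "Omega_d b \<sigma> f2 x k z k + Omega_j c \<nu> f2 x k z k \<le> \<beta> * r * (\<kappa> * \<rho> r)"
  proof (cases "CARD('n) \<ge> 2")
    case True
    define I where "I = (\<integral>\<^sup>+ u. ennreal (min ((norm (c x k u - c z k u))\<^sup>2) (4 * r * norm (c x k u - c z k u))) \<partial>\<nu>)"
    define X where "X = 2 * (v \<bullet> (b x k - b z k)) + (norm \<tau>)\<^sup>2"
    have E: "I \<noteq> \<infinity> \<and> enn2real I + X \<le> 2 * \<kappa> * r * \<rho> r"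
      using ereal_cond C2 True by (simp add: I_def X_def r_def v_def \<tau>_def)
    have J: "Omega_j c \<nu> f2 x k z k \<le> \<beta> / 2 * enn2real I"
      unfolding Oj I_def
    proof (rule integral_le_nn)
      fix u
      show "Fr (norm (v + (c x k u - c z k u))) - Fr r - \<beta> * (v \<bullet> (c x k u - c z k u))
          \<le> \<beta> / 2 * min ((norm (c x k u - c z k u))\<^sup>2) (4 * r * norm (c x k u - c z k u))"
        using jump_bound_d2[of v "c x k u - c z k u"] xz by (simp add: r_def v_def \<beta>_def)
    next
      show "\<beta> / 2 > 0" using b0 by simp
    next
      show "(\<integral>\<^sup>+ u. ennreal (min ((norm (c x k u - c z k u))\<^sup>2) (4 * r * norm (c x k u - c z k u))) \<partial>\<nu>) \<noteq> \<infinity>"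
        using E by (simp add: I_def)
    qed
    have S0: "(GG' r / r) * (\<Sum>j\<in>UNIV. (\<Sum>p\<in>UNIV. \<tau> $ p $ j * v $ p)^2) \<le> 0"
      using GG'_neg[OF r0] r0 by (intro mult_nonpos_nonneg divide_nonpos_pos sum_nonneg) auto
    have D: "Omega_d b \<sigma> f2 x k z k \<le> \<beta> / 2 * X"
      unfolding Od X_def using S0 by (simp add: algebra_simps)
    have "Omega_d b \<sigma> f2 x k z k + Omega_j c \<nu> f2 x k z k \<le> \<beta> / 2 * (X + enn2real I)"
      using D J by (simp add: algebra_simps)
    also have "\<dots> \<le> \<beta> / 2 * (2 * \<kappa> * r * \<rho> r)"
      using E b0 by (intro mult_left_mono) auto
    finally show ?thesis by (simp add: algebra_simps)
  next
    case False
    then have "CARD('n) = 1" using zero_less_card_finite[where 'a='n] by linarith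
    then obtain p0 :: 'n where u: "UNIV = {p0}" by (metis card_1_singletonE)
    have c1: "\<forall>p. sgnF (x $ p - z $ p) * (b x k $ p - b z k $ p) \<le> \<kappa> * \<rho> r"
         "\<forall>u\<in>space \<nu>. \<forall>p. x $ p \<le> z $ p \<longrightarrow> (x + c x k u) $ p \<le> (z + c z k u) $ p"
         "\<forall>u\<in>space \<nu>. \<forall>p. z $ p \<le> x $ p \<longrightarrow> (z + c z k u) $ p \<le> (x + c x k u) $ p"
      using C2 C2' \<open>CARD('n) = 1\<close> by (auto simp: r_def)
    define d where "d = v $ p0"
    have rd: "r = \<bar>d\<bar>" unfolding r_def d_def v_def using card1_norm[OF u] by blast
    have d0: "d \<noteq> 0" using r0 rd by simp
    have J: "Omega_j c \<nu> f2 x k z k \<le> 0"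
    proof -
      have "0 \<le> (\<integral>u. - (Fr (norm (v + (c x k u - c z k u))) - Fr r
          - \<beta> * (v \<bullet> (c x k u - c z k u))) \<partial>\<nu>)"
      proof (rule Bochner_Integration.integral_nonneg)
        fix u assume us: "u \<in> space \<nu>"
        define e where "e = (c x k u - c z k u) $ p0"
        have h2: "x $ p0 \<le> z $ p0 \<longrightarrow> (x + c x k u) $ p0 \<le> (z + c z k u) $ p0" using c1(2) us by blast
        have h3: "z $ p0 \<le> x $ p0 \<longrightarrow> (z + c z k u) $ p0 \<le> (x + c x k u) $ p0" using c1(3) us by blast
        have m1: "d \<le> 0 \<longrightarrow> d + e \<le> 0" using h2 unfolding d_def e_def v_def by auto
        have m2: "d \<ge> 0 \<longrightarrow> d + e \<ge> 0" using h3 unfolding d_def e_def v_def by auto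
        have "Fr (norm (v + (c x k u - c z k u))) - Fr r - \<beta> * (v \<bullet> (c x k u - c z k u))
            = Fr \<bar>d + e\<bar> - Fr \<bar>d\<bar> - GG \<bar>d\<bar> * (d * e)"
          unfolding card1_norm[OF u] card1_inner[OF u] by (simp add: d_def e_def rd \<beta>_def)
        also have "\<dots> \<le> 0" by (rule jump_bound_1d[OF d0 m1 m2])
        finally show "0 \<le> - (Fr (norm (v + (c x k u - c z k u))) - Fr r - \<beta> * (v \<bullet> (c x k u - c z k u)))"
          by simp
      qed
      then show ?thesis unfolding Oj by (simp only: integral_minus)
    qed
    define t where "t = \<tau> $ p0 $ p0"
    have tr: "(GG' r / r) * (\<Sum>j\<in>UNIV. (\<Sum>p\<in>UNIV. \<tau> $ p $ j * v $ p)^2) + \<beta> * (norm \<tau>)^2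
        = t^2 * (GG' r * r + GG r)"
    proof -
      have "(\<Sum>j\<in>UNIV. (\<Sum>p\<in>UNIV. \<tau> $ p $ j * v $ p)^2) = t^2 * r^2"
        unfolding u by (simp add: t_def rd d_def power_mult_distrib)
      moreover have "(norm \<tau>)^2 = t^2"
        unfolding card1_norm'[OF u, of \<tau>] card1_norm[OF u] by (simp add: t_def)
      ultimately show ?thesis using r0 by (simp add: \<beta>_def power2_eq_square algebra_simps)
    qed
    have tr0: "t^2 * (GG' r * r + GG r) \<le> 0"
      using GG'_comb[OF r0] by (simp add: mult_nonneg_nonpos)
    have dr: "v \<bullet> (b x k - b z k) \<le> r * (\<kappa> * \<rho> r)"
    proof -
      have "v \<bullet> (b x k - b z k) = d * (b x k $ p0 - b z k $ p0)"
        unfolding card1_inner[OF u] by (simp add: d_def)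
      also have "\<dots> = r * (sgnF d * (b x k $ p0 - b z k $ p0))"
        using sgnF_abs[OF d0] rd by (metis mult.assoc mult.commute)
      also have "\<dots> \<le> r * (\<kappa> * \<rho> r)"
        using c1(1) r0 by (intro mult_left_mono) (auto simp: d_def v_def)
      finally show ?thesis .
    qed
    have "Omega_d b \<sigma> f2 x k z k \<le> \<beta> * (r * (\<kappa> * \<rho> r))"
    proof -
      have "\<beta> * (v \<bullet> (b x k - b z k)) \<le> \<beta> * (r * (\<kappa> * \<rho> r))"
        using dr b0 by (intro mult_left_mono) auto
      then show ?thesis unfolding Od tr using tr0 by linarith
    qed
    then show ?thesis using J by (simp add: algebra_simps)
  qed
  then show ?thesis using \<beta>r by (simp add: r_def)
qed


theorem mainTheorem3:
  fixes b :: "real^'n \<Rightarrow> nat \<Rightarrow> real^'n"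
    and \<sigma> :: "real^'n \<Rightarrow> nat \<Rightarrow> real^'n^'n"
    and c :: "real^'n \<Rightarrow> nat \<Rightarrow> 'u \<Rightarrow> real^'n"
    and \<nu> :: "'u measure"
    and q :: "nat \<Rightarrow> nat \<Rightarrow> real^'n \<Rightarrow> real"
    and \<delta>0 :: real and \<rho> :: "real \<Rightarrow> real"
  assumes nu_sigma_finite: "sigma_finite_measure \<nu>"
    and b_meas: "\<And>k. (\<lambda>x. b x k) \<in> borel_measurable borel"
    and sigma_meas: "\<And>k. (\<lambda>x. \<sigma> x k) \<in> borel_measurable borel"
    and c_meas: "(\<lambda>(x, k, u). c x k u) \<in> borel \<Otimes>\<^sub>M (count_space UNIV \<Otimes>\<^sub>M \<nu>) \<rightarrow>\<^sub>M borel"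
    and q_nonneg: "\<And>k l x. k \<noteq> l \<Longrightarrow> q k l x \<ge> 0"
    and q_summable: "\<And>k x. summable (\<lambda>l. q k l x)"
    and q_diag: "\<And>k x. q k k x = - (\<Sum>l. if l = k then 0 else q k l x)"
    and delta0_pos: "\<delta>0 > 0"
    and rho_mono: "mono_on {0..} \<rho>"
    and rho_concave: "concave_on {0..} \<rho>"
    and rho_nonneg: "\<And>r. r \<ge> 0 \<Longrightarrow> \<rho> r \<ge> 0"
    and rho_pos: "\<And>r. r > 0 \<Longrightarrow> 0 < \<rho> r"
    and rho_growth: "\<And>r. r > 0 \<Longrightarrow> \<rho> r \<le> (1 + r)\<^sup>2 * \<rho> (r / (1 + r))"
    and rho_osgood: "(\<integral>\<^sup>+ r\<in>{0<..1}. ennreal (1 / \<rho> r) \<partial>lborel) = \<infinity>"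
    and assmF: "\<forall>R>0. \<exists>\<kappa>>0. condF b \<sigma> c \<nu> q \<delta>0 \<rho> R \<kappa>"
  shows "\<forall>R>0. \<forall>\<kappa>>0. condF b \<sigma> c \<nu> q \<delta>0 \<rho> R \<kappa> \<longrightarrow>
     (\<forall>k l x z. max (norm x) (norm z) \<le> R \<longrightarrow>
        coupA b \<sigma> c \<nu> q (\<lambda>x k z l. if k \<noteq> l then 1 else 0) x k z l
          \<le> \<kappa> * \<rho> (Fr (norm (x - z)))) \<and>
     (\<forall>k x z. max (norm x) (norm z) \<le> R \<and> 0 < norm (x - z) \<and> norm (x - z) \<le> \<delta>0 \<longrightarrow>
        coupA b \<sigma> c \<nu> q (\<lambda>x k z l. Fr (norm (x - z)) + (if k \<noteq> l then 1 else 0)) x k z k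
          \<le> 2 * \<kappa> * \<rho> (Fr (norm (x - z))))"
  proof (intro allI impI conjI)
  fix R \<kappa> :: real
  assume R: "R > 0" and kp: "\<kappa> > 0" and cond: "condF b \<sigma> c \<nu> q \<delta>0 \<rho> R \<kappa>"
  have C1: "\<And>k (x :: real^'n) z. max (norm x) (norm z) \<le> R \<Longrightarrow>
        (\<Sum>l. if l = k then 0 else \<bar>q k l x - q k l z\<bar>) \<le> \<kappa> * \<rho> (Fr (norm (x - z)))"
    using cond unfolding condF_def by blast
  have Fr0: "\<And>r. r \<ge> 0 \<Longrightarrow> Fr r \<ge> 0" by (simp add: Fr_def)
  {
    fix k l :: nat and x z :: "real^'n"
    assume nrm: "max (norm x) (norm (z :: real^'n)) \<le> R"
    have rn: "0 \<le> \<kappa> * \<rho> (Fr (norm (x - z)))"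
      using kp rho_nonneg[OF Fr0[OF norm_ge_zero[of "x - z"]]] by simp
    have "coupA b \<sigma> c \<nu> q gg x k z l = Omega_s q gg x k z l"
      unfolding coupA_def Omega_d_g Omega_j_g by simp
    also have "\<dots> \<le> \<kappa> * \<rho> (Fr (norm (x - z)))"
    proof (cases "k = l")
      case True
      have "Omega_s q gg x k z k = (\<Sum>l. if l = k then 0 else \<bar>q k l x - q k l z\<bar>)"
        by (rule Os_diag[OF q_nonneg q_summable]) auto
      then show ?thesis using True C1[OF nrm, of k] by simp
    next
      case False
      show ?thesis using Os_offdiag[where q = q and k = k and l = l and x = x and z = z, OF q_nonneg q_summable q_diag False] rn by linarith
    qed
    finally show "coupA b \<sigma> c \<nu> q gg x k z l \<le> \<kappa> * \<rho> (Fr (norm (x - z)))" .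
  }
  {
    fix k :: nat and x z :: "real^'n"
    assume H: "max (norm x) (norm (z :: real^'n)) \<le> R \<and> 0 < norm (x - z) \<and> norm (x - z) \<le> \<delta>0"
    then have nrm: "max (norm x) (norm z) \<le> R" and xz: "x \<noteq> z" and dl: "norm (x - z) \<le> \<delta>0" by auto
    define r where "r = norm (x - z)"
    have r0: "r > 0" using H by (simp add: r_def)
    have Os: "Omega_s q f2 x k z k = (\<Sum>l. if l = k then 0 else \<bar>q k l x - q k l z\<bar>)"
      by (rule Os_diag[OF q_nonneg q_summable]) auto
    have core: "Omega_d b \<sigma> f2 x k z k + Omega_j c \<nu> f2 x k z k \<le> \<kappa> * \<rho> r / (1 + r)^2"
      using part2_core[OF cond kp nrm xz dl, of k] by (simp add: r_def)
    have gr: "\<rho> r / (1 + r)^2 \<le> \<rho> (Fr r)"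
      using rho_growth[OF r0] r0 by (simp add: Fr_def divide_le_eq mult.commute)
    have "\<kappa> * \<rho> r / (1 + r)^2 \<le> \<kappa> * \<rho> (Fr r)"
      using mult_left_mono[OF gr, of \<kappa>] kp by simp
    then have "coupA b \<sigma> c \<nu> q f2 x k z k \<le> \<kappa> * \<rho> (Fr r) + \<kappa> * \<rho> (Fr r)"
      unfolding coupA_def Os using core C1[OF nrm, of k] \<open>\<kappa> * \<rho> r / (1 + r)^2 \<le> \<kappa> * \<rho> (Fr r)\<close>
      unfolding r_def by linarith
    then show "coupA b \<sigma> c \<nu> q f2 x k z k \<le> 2 * \<kappa> * \<rho> (Fr (norm (x - z)))"
      by (simp add: r_def)
  }
qed

end
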